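(* Let $D,D',E,E'$ be abstract storage devices. (i) If $D\le D'$ and $E\le E'$, then $D\times E\le D'\times E'$. (ii) If $D\le D'$, then $D^{(k)}\le D'^{(k)}$ for every integer $k\ge1$.
   Context: An abstract storage device (ASD) is a pair $D=(\mathcal{S}_D,\mathcal{P}_D)$, $\mathcal{S}_D$ a finite set and $\mathcal{P}_D$ a finite family of partitions of $\mathcal{S}_D$. For a partition $\pi$ of $\mathcal{S}'$ and $\phi:\mathcal{S}\to\mathcal{S}'$, $\pi\circ\phi$ is the partition of $\mathcal{S}$ with $x,y$ in the same block iff $\phi(x),\phi(y)$ are in the same block of $\pi$; $\pi\preceq\rho$ means every block of $\pi$ lies in a block of $\rho$; $\wedge$ is the meet of partitions (nonempty pairwise intersections of blocks). $D\le D'$ means there exist $\phi:\mathcal{S}_D\to\mathcal{S}_{D'}$, $\alpha:\mathcal{P}_D\to\mathcal{P}_{D'}$ with $\alpha(\pi)\circ\phi\preceq\pi$ for all $\pi\in\mathcal{P}_D$. The direct product $D\times D'$ has state space $\mathcal{S}_D\times\mathcal{S}_{D'}$ and partition set $\{\pi\times\pi':\pi\in\mathcal{P}_D,\pi'\in\mathcal{P}_{D'}\}$ with $\pi\times\pi'=\{B\times B':B\in\pi,B'\in\pi'\}$. For $k\ge1$, $D^{(k)}$ has state space $\mathcal{S}_D$ and partition set $\{\pi_1\wedge\cdots\wedge\pi_k:\pi_1,\dots,\pi_k\in\mathcal{P}_D\}$. *)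

theory Defs
  imports "HOL-Library.Disjoint_Sets"
begin

text \<open>An abstract storage device: a pair (state space, family of partitions of it).
  A partition is represented as a set of blocks (library notion partition_on).\<close>
type_synonym 'a asd = "'a set \<times> 'a set set set"

definition is_asd :: "'a asd \<Rightarrow> bool" where
  "is_asd D \<longleftrightarrow> finite (fst D) \<and> finite (snd D) \<and> (\<forall>\<pi>\<in>snd D. partition_on (fst D) \<pi>)"

definition pullback :: "'a set \<Rightarrow> ('a \<Rightarrow> 'b) \<Rightarrow> 'b set set \<Rightarrow> 'a set set" where
  "pullback S \<phi> \<pi> = S // {(x, y). x \<in> S \<and> y \<in> S \<and> (\<exists>B\<in>\<pi>. \<phi> x \<in> B \<and> \<phi> y \<in> B)}"

definition refines :: "'a set set \<Rightarrow> 'a set set \<Rightarrow> bool" where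
  "refines \<pi> \<rho> \<longleftrightarrow> (\<forall>B\<in>\<pi>. \<exists>C\<in>\<rho>. B \<subseteq> C)"

definition meet :: "'a set set \<Rightarrow> 'a set set \<Rightarrow> 'a set set" where
  "meet \<pi> \<rho> = {B \<inter> C | B C. B \<in> \<pi> \<and> C \<in> \<rho> \<and> B \<inter> C \<noteq> {}}"

definition asd_le :: "'a asd \<Rightarrow> 'b asd \<Rightarrow> bool" where
  "asd_le D D' \<longleftrightarrow> (\<exists>\<phi> \<alpha>. \<phi> ` fst D \<subseteq> fst D' \<and> \<alpha> ` snd D \<subseteq> snd D' \<and>
      (\<forall>\<pi>\<in>snd D. refines (pullback (fst D) \<phi> (\<alpha> \<pi>)) \<pi>))"

definition prod_part :: "'a set set \<Rightarrow> 'b set set \<Rightarrow> ('a \<times> 'b) set set" where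
  "prod_part \<pi> \<pi>' = {B \<times> B' | B B'. B \<in> \<pi> \<and> B' \<in> \<pi>'}"

definition asd_prod :: "'a asd \<Rightarrow> 'b asd \<Rightarrow> ('a \<times> 'b) asd" where
  "asd_prod D D' = (fst D \<times> fst D', {prod_part \<pi> \<pi>' | \<pi> \<pi>'. \<pi> \<in> snd D \<and> \<pi>' \<in> snd D'})"

fun meets :: "'a set set list \<Rightarrow> 'a set set" where
  "meets [] = {}"
| "meets (\<pi> # \<pi>s) = (if \<pi>s = [] then \<pi> else meet \<pi> (meets \<pi>s))"

definition asd_pow :: "nat \<Rightarrow> 'a asd \<Rightarrow> 'a asd" where
  "asd_pow k D = (fst D, {meets \<pi>s | \<pi>s. length \<pi>s = k \<and> set \<pi>s \<subseteq> snd D})"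

end

theory Submission
  imports Defs
begin

lemma refines_pullback_iff:
  "refines (pullback S \<phi> \<pi>) \<rho> \<longleftrightarrow>
     (\<forall>x\<in>S. \<exists>C\<in>\<rho>. {y\<in>S. \<exists>B\<in>\<pi>. \<phi> x \<in> B \<and> \<phi> y \<in> B} \<subseteq> C)"
proof -
  have "\<And>x. {(x, y). x \<in> S \<and> y \<in> S \<and> (\<exists>B\<in>\<pi>. \<phi> x \<in> B \<and> \<phi> y \<in> B)} `` {x}
      = (if x \<in> S then {y\<in>S. \<exists>B\<in>\<pi>. \<phi> x \<in> B \<and> \<phi> y \<in> B} else {})" by auto
  then show ?thesis unfolding refines_def pullback_def quotient_def by auto
qed

lemma meets_iff:
  "ps \<noteq> [] \<Longrightarrow> (\<exists>Q\<in>meets ps. a \<in> Q \<and> b \<in> Q) \<longleftrightarrow> (\<forall>p\<in>set ps. \<exists>B\<in>p. a \<in> B \<and> b \<in> B)"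
proof (induction ps)
  case Nil then show ?case by simp
next
  case (Cons p ps)
  show ?case
  proof (cases "ps = []")
    case True then show ?thesis by simp
  next
    case False
    have "(\<exists>Q\<in>meet p (meets ps). a \<in> Q \<and> b \<in> Q) \<longleftrightarrow>
          (\<exists>B\<in>p. a \<in> B \<and> b \<in> B) \<and> (\<exists>C\<in>meets ps. a \<in> C \<and> b \<in> C)"
      unfolding meet_def by blast
    then show ?thesis using Cons.IH[OF False] False by simp
  qed
qed

lemma meets_mem:
  "ps \<noteq> [] \<Longrightarrow> (\<forall>p\<in>set ps. f p \<in> p \<and> a \<in> f p) \<Longrightarrow> (\<Inter>p\<in>set ps. f p) \<in> meets ps"
proof (induction ps)
  case Nil then show ?case by simp
next
  case (Cons p ps)
  show ?case
  proof (cases "ps = []")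
    case True then show ?thesis using Cons.prems by simp
  next
    case False
    have "(\<Inter>p\<in>set ps. f p) \<in> meets ps" using Cons False by simp
    moreover have "a \<in> f p \<inter> (\<Inter>p\<in>set ps. f p)" using Cons.prems by auto
    moreover have "f p \<in> p" using Cons.prems by auto
    ultimately have "f p \<inter> (\<Inter>p\<in>set ps. f p) \<in> meet p (meets ps)"
      unfolding meet_def by blast
    then show ?thesis using False by simp
  qed
qed

lemma prod_part_le:
  assumes "asd_le D D'" "asd_le E E'"
  shows "asd_le (asd_prod D E) (asd_prod D' E')"
proof -
  obtain \<phi> \<alpha> where ph: "\<phi> ` fst D \<subseteq> fst D'" "\<alpha> ` snd D \<subseteq> snd D'"
    "\<forall>\<pi>\<in>snd D. refines (pullback (fst D) \<phi> (\<alpha> \<pi>)) \<pi>"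
    using assms(1) unfolding asd_le_def by auto
  obtain \<psi> \<beta> where ps: "\<psi> ` fst E \<subseteq> fst E'" "\<beta> ` snd E \<subseteq> snd E'"
    "\<forall>\<pi>\<in>snd E. refines (pullback (fst E) \<psi> (\<beta> \<pi>)) \<pi>"
    using assms(2) unfolding asd_le_def by auto
  define sel where "sel P = (SOME pr. fst pr \<in> snd D \<and> snd pr \<in> snd E \<and> P = prod_part (fst pr) (snd pr))" for P
  define \<gamma> where "\<gamma> P = prod_part (\<alpha> (fst (sel P))) (\<beta> (snd (sel P)))" for P
  define \<chi> where "\<chi> = (\<lambda>(a, b). (\<phi> a, \<psi> b))"
  have sel: "fst (sel P) \<in> snd D \<and> snd (sel P) \<in> snd E \<and> P = prod_part (fst (sel P)) (snd (sel P))"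
    if "P \<in> snd (asd_prod D E)" for P
  proof -
    from that obtain \<pi> \<sigma> where "\<pi> \<in> snd D" "\<sigma> \<in> snd E" "P = prod_part \<pi> \<sigma>"
      unfolding asd_prod_def by auto
    then have "\<exists>pr. fst pr \<in> snd D \<and> snd pr \<in> snd E \<and> P = prod_part (fst pr) (snd pr)"
      by (intro exI[of _ "(\<pi>,\<sigma>)"]) auto
    then show ?thesis unfolding sel_def by (rule someI_ex)
  qed
  have "\<chi> ` fst (asd_prod D E) \<subseteq> fst (asd_prod D' E')"
    using ph(1) ps(1) unfolding \<chi>_def asd_prod_def by auto
  moreover have "\<gamma> ` snd (asd_prod D E) \<subseteq> snd (asd_prod D' E')"
  proof
    fix Q assume "Q \<in> \<gamma> ` snd (asd_prod D E)"
    then obtain P where P: "P \<in> snd (asd_prod D E)" "Q = \<gamma> P" by auto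
    have "\<alpha> (fst (sel P)) \<in> snd D'" "\<beta> (snd (sel P)) \<in> snd E'"
      using sel[OF P(1)] ph(2) ps(2) by auto
    then show "Q \<in> snd (asd_prod D' E')"
      unfolding P(2) \<gamma>_def asd_prod_def by auto
  qed
  moreover have "refines (pullback (fst (asd_prod D E)) \<chi> (\<gamma> P)) P"
    if P: "P \<in> snd (asd_prod D E)" for P
  proof -
    let ?\<pi> = "fst (sel P)" and ?\<sigma> = "snd (sel P)"
    have s: "?\<pi> \<in> snd D" "?\<sigma> \<in> snd E" "P = prod_part ?\<pi> ?\<sigma>" using sel[OF P] by auto
    have r1: "\<forall>x\<in>fst D. \<exists>C\<in>?\<pi>. {y\<in>fst D. \<exists>B\<in>\<alpha> ?\<pi>. \<phi> x \<in> B \<and> \<phi> y \<in> B} \<subseteq> C"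
      using ph(3) s(1) unfolding refines_pullback_iff by blast
    have r2: "\<forall>x\<in>fst E. \<exists>C\<in>?\<sigma>. {y\<in>fst E. \<exists>B\<in>\<beta> ?\<sigma>. \<psi> x \<in> B \<and> \<psi> y \<in> B} \<subseteq> C"
      using ps(3) s(2) unfolding refines_pullback_iff by blast
    show ?thesis unfolding refines_pullback_iff
    proof
      fix z assume z: "z \<in> fst (asd_prod D E)"
      then obtain x y where xy: "z = (x, y)" "x \<in> fst D" "y \<in> fst E" unfolding asd_prod_def by auto
      obtain C1 where C1: "C1 \<in> ?\<pi>" "{y\<in>fst D. \<exists>B\<in>\<alpha> ?\<pi>. \<phi> x \<in> B \<and> \<phi> y \<in> B} \<subseteq> C1"
        using r1 xy(2) by blast
      obtain C2 where C2: "C2 \<in> ?\<sigma>" "{y'\<in>fst E. \<exists>B\<in>\<beta> ?\<sigma>. \<psi> y \<in> B \<and> \<psi> y' \<in> B} \<subseteq> C2"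
        using r2 xy(3) by blast
      have "C1 \<times> C2 \<in> P" using s(3) C1(1) C2(1) unfolding prod_part_def by auto
      moreover have "{w\<in>fst (asd_prod D E). \<exists>B\<in>\<gamma> P. \<chi> z \<in> B \<and> \<chi> w \<in> B} \<subseteq> C1 \<times> C2"
      proof
        fix w assume w: "w \<in> {w\<in>fst (asd_prod D E). \<exists>B\<in>\<gamma> P. \<chi> z \<in> B \<and> \<chi> w \<in> B}"
        then obtain x' y' where w': "w = (x', y')" "x' \<in> fst D" "y' \<in> fst E"
          unfolding asd_prod_def by auto
        from w obtain B1 B2 where B: "B1 \<in> \<alpha> ?\<pi>" "B2 \<in> \<beta> ?\<sigma>"
          "(\<phi> x, \<psi> y) \<in> B1 \<times> B2" "(\<phi> x', \<psi> y') \<in> B1 \<times> B2"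
          unfolding \<gamma>_def prod_part_def \<chi>_def xy(1) w'(1) by auto
        have "x' \<in> C1" using C1(2) B w'(2) by auto
        moreover have "y' \<in> C2" using C2(2) B w'(3) by auto
        ultimately show "w \<in> C1 \<times> C2" using w'(1) by auto
      qed
      ultimately show "\<exists>C\<in>P. {w\<in>fst (asd_prod D E). \<exists>B\<in>\<gamma> P. \<chi> z \<in> B \<and> \<chi> w \<in> B} \<subseteq> C"
        by blast
    qed
  qed
  ultimately show ?thesis unfolding asd_le_def by blast
qed

lemma pow_le:
  assumes D': "is_asd D'" and le: "asd_le D D'" and k: "k \<ge> 1"
  shows "asd_le (asd_pow k D) (asd_pow k D')"
proof -
  obtain \<phi> \<alpha> where ph: "\<phi> ` fst D \<subseteq> fst D'" "\<alpha> ` snd D \<subseteq> snd D'"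
    "\<forall>\<pi>\<in>snd D. refines (pullback (fst D) \<phi> (\<alpha> \<pi>)) \<pi>"
    using le unfolding asd_le_def by auto
  define sel where "sel P = (SOME ps. length ps = k \<and> set ps \<subseteq> snd D \<and> P = meets ps)" for P
  define \<gamma> where "\<gamma> P = meets (map \<alpha> (sel P))" for P
  have sel: "length (sel P) = k \<and> set (sel P) \<subseteq> snd D \<and> P = meets (sel P)"
    if "P \<in> snd (asd_pow k D)" for P
  proof -
    from that obtain ps where "length ps = k" "set ps \<subseteq> snd D" "P = meets ps"
      unfolding asd_pow_def by auto
    then have "\<exists>ps. length ps = k \<and> set ps \<subseteq> snd D \<and> P = meets ps" by blast
    then show ?thesis unfolding sel_def by (rule someI_ex)
  qed
  have "\<phi> ` fst (asd_pow k D) \<subseteq> fst (asd_pow k D')"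
    using ph(1) unfolding asd_pow_def by auto
  moreover have "\<gamma> ` snd (asd_pow k D) \<subseteq> snd (asd_pow k D')"
  proof
    fix Q assume "Q \<in> \<gamma> ` snd (asd_pow k D)"
    then obtain P where P: "P \<in> snd (asd_pow k D)" "Q = \<gamma> P" by auto
    have "length (map \<alpha> (sel P)) = k" "set (map \<alpha> (sel P)) \<subseteq> snd D'"
      using sel[OF P(1)] ph(2) by auto
    then show "Q \<in> snd (asd_pow k D')" unfolding P(2) \<gamma>_def asd_pow_def
      by (simp only: snd_conv) blast
  qed
  moreover have "refines (pullback (fst (asd_pow k D)) \<phi> (\<gamma> P)) P"
    if P: "P \<in> snd (asd_pow k D)" for P
  proof -
    let ?ps = "sel P"
    have s: "length ?ps = k" "set ?ps \<subseteq> snd D" "P = meets ?ps" using sel[OF P] by auto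
    have ne: "?ps \<noteq> []" using s(1) k by auto
    show ?thesis unfolding refines_pullback_iff
    proof
      fix x assume x: "x \<in> fst (asd_pow k D)"
      hence xD: "x \<in> fst D" unfolding asd_pow_def by simp
      have r: "\<exists>C\<in>p. {y\<in>fst D. \<exists>B\<in>\<alpha> p. \<phi> x \<in> B \<and> \<phi> y \<in> B} \<subseteq> C" if "p \<in> set ?ps" for p
        using ph(3) s(2) that xD unfolding refines_pullback_iff by blast
      define f where "f p = (SOME C. C \<in> p \<and> {y\<in>fst D. \<exists>B\<in>\<alpha> p. \<phi> x \<in> B \<and> \<phi> y \<in> B} \<subseteq> C)" for p
      have f: "f p \<in> p \<and> {y\<in>fst D. \<exists>B\<in>\<alpha> p. \<phi> x \<in> B \<and> \<phi> y \<in> B} \<subseteq> f p"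
        if "p \<in> set ?ps" for p
        using r[OF that] unfolding f_def by (metis (mono_tags, lifting) someI_ex)
      have xin: "x \<in> f p" if "p \<in> set ?ps" for p
      proof -
        have "\<alpha> p \<in> snd D'" using that s(2) ph(2) by auto
        hence "partition_on (fst D') (\<alpha> p)" using D' unfolding is_asd_def by auto
        moreover have "\<phi> x \<in> fst D'" using ph(1) xD by auto
        ultimately obtain B where "B \<in> \<alpha> p" "\<phi> x \<in> B" unfolding partition_on_def by auto
        then show ?thesis using f[OF that] xD by auto
      qed
      have mem: "(\<Inter>p\<in>set ?ps. f p) \<in> P"
        using meets_mem[OF ne, of f x] f xin s(3) by auto
      have "{y\<in>fst (asd_pow k D). \<exists>B\<in>\<gamma> P. \<phi> x \<in> B \<and> \<phi> y \<in> B} \<subseteq> (\<Inter>p\<in>set ?ps. f p)"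
      proof
        fix y assume y: "y \<in> {y\<in>fst (asd_pow k D). \<exists>B\<in>\<gamma> P. \<phi> x \<in> B \<and> \<phi> y \<in> B}"
        hence yD: "y \<in> fst D" unfolding asd_pow_def by simp
        have ne': "map \<alpha> ?ps \<noteq> []" using ne by simp
        from y have "\<forall>q\<in>set (map \<alpha> ?ps). \<exists>B\<in>q. \<phi> x \<in> B \<and> \<phi> y \<in> B"
          using meets_iff[OF ne'] unfolding \<gamma>_def by blast
        then show "y \<in> (\<Inter>p\<in>set ?ps. f p)" using f yD by fastforce
      qed
      with mem show "\<exists>C\<in>P. {y\<in>fst (asd_pow k D). \<exists>B\<in>\<gamma> P. \<phi> x \<in> B \<and> \<phi> y \<in> B} \<subseteq> C"
        by blast
    qed
  qed
  ultimately show ?thesis unfolding asd_le_def by blast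
qed

theorem proposition1:
  fixes D :: "'a asd" and D' :: "'b asd" and E :: "'c asd" and E' :: "'d asd"
  assumes "is_asd D" "is_asd D'" "is_asd E" "is_asd E'"
  shows "(asd_le D D' \<and> asd_le E E' \<longrightarrow> asd_le (asd_prod D E) (asd_prod D' E'))
       \<and> (\<forall>k::nat. k \<ge> 1 \<longrightarrow> asd_le D D' \<longrightarrow> asd_le (asd_pow k D) (asd_pow k D'))"
  using prod_part_le pow_le[OF assms(2)] by blast

end
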